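(* Let $G=(\Sigma,S,s_0,\delta)$ be a commutative grammar. If $D$ is a simple cycle or a skeleton run of $G$, then $\|\mathrm{out}(D)\|=O\!\left(2^{|S|^{O(1)}}\right)$, where the implicit constants are absolute (independent of $G$ and $D$).
   Context: For $v\in\mathbb{N}^X$, $|v|=\sum_x v(x)$ and $\|v\|=\max_x v(x)$. A commutative grammar is $G=(\Sigma,S,s_0,\delta)$ with finite alphabet $\Sigma$, finite state set $S$, $s_0\in S$, and a finite set $\delta\subseteq S\times\mathbb{N}^\Sigma\times\mathbb{N}^S$ of transitions $\tau=(s,a,t)$ ($\mathrm{source}(\tau)=s$, $\mathrm{out}(\tau)=a$, $\mathrm{target}(\tau)=t$); every state is the source of some transition, and every transition has $|a|\le1$, $|t|\le2$. For $D\in\mathbb{N}^\delta$ let $\mathrm{source}(D)(s)=\sum_{\mathrm{source}(\tau)=s}D(\tau)$, $\mathrm{out}(D)=\sum_\tau D(\tau)\mathrm{out}(\tau)$, $\mathrm{target}(D)=\sum_\tau D(\tau)\mathrm{target}(\tau)$, $\mathrm{supp}(D)=\{s:\mathrm{source}(D)(s)>0\}$. $D$ is connected from $s$ if every $t\in\mathrm{supp}(D)$ equals $s$ or is reachable by transitions $\tau_1,\ldots,\tau_m$ with $D(\tau_i)>0$, $\mathrm{source}(\tau_1)=s$, $\mathrm{source}(\tau_{i+1})\in\mathrm{target}(\tau_i)$, $t\in\mathrm{target}(\tau_m)$. $D$ is a cycle from $s$ if it is connected from $s$ and $\mathrm{source}(D)=\mathrm{target}(D)$; a cycle is a cycle from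 some state. $D$ is a run if it is connected from $s_0$ and $\mathrm{source}(D)=\mathrm{target}(D)+\{s_0\}$. A simple cycle is a nonzero cycle that cannot be written as a sum of smaller nonzero cycles. A skeleton run is a run $D$ which cannot be written as $D=D_1+C$ with $D_1$ a run, $C$ a nonzero cycle, and $\mathrm{supp}(D_1)=\mathrm{supp}(D)$. *)

theory Defs
  imports Main "HOL-Library.Multiset"
begin

text \<open>Letters and states are encoded as natural numbers (every finite grammar is
isomorphic to one of this form); this lets the constants be quantified before
all grammars. Vectors in N^X are multisets over X. A transition (s,a,t) is a
triple; a vector D in N^delta is a multiset of transitions contained in delta.\<close>

type_synonym trans = "nat \<times> nat multiset \<times> nat multiset"

definition tr_source :: "trans \<Rightarrow> nat" where "tr_source \<tau> = fst \<tau>"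
definition tr_out :: "trans \<Rightarrow> nat multiset" where "tr_out \<tau> = fst (snd \<tau>)"
definition tr_target :: "trans \<Rightarrow> nat multiset" where "tr_target \<tau> = snd (snd \<tau>)"

definition vnorm :: "nat multiset \<Rightarrow> nat" where
  "vnorm v = Max (insert 0 (count v ` set_mset v))"

definition comm_grammar :: "nat set \<Rightarrow> nat set \<Rightarrow> nat \<Rightarrow> trans set \<Rightarrow> bool" where
  "comm_grammar \<Sigma> S s0 \<delta> \<longleftrightarrow>
     finite \<Sigma> \<and> finite S \<and> s0 \<in> S \<and> finite \<delta> \<and>
     (\<forall>\<tau>\<in>\<delta>. tr_source \<tau> \<in> S \<and> set_mset (tr_out \<tau>) \<subseteq> \<Sigma> \<and> set_mset (tr_target \<tau>) \<subseteq> S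
            \<and> size (tr_out \<tau>) \<le> 1 \<and> size (tr_target \<tau>) \<le> 2) \<and>
     (\<forall>s\<in>S. \<exists>\<tau>\<in>\<delta>. tr_source \<tau> = s)"

definition msource :: "trans multiset \<Rightarrow> nat multiset" where
  "msource D = image_mset tr_source D"
definition mout :: "trans multiset \<Rightarrow> nat multiset" where
  "mout D = sum_mset (image_mset tr_out D)"
definition mtarget :: "trans multiset \<Rightarrow> nat multiset" where
  "mtarget D = sum_mset (image_mset tr_target D)"
definition msupp :: "trans multiset \<Rightarrow> nat set" where
  "msupp D = set_mset (msource D)"

definition reachable_in :: "trans multiset \<Rightarrow> nat \<Rightarrow> nat \<Rightarrow> bool" where
  "reachable_in D s t \<longleftrightarrow> (\<exists>\<tau>s. \<tau>s \<noteq> [] \<and> set \<tau>s \<subseteq> set_mset D \<and>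
      tr_source (hd \<tau>s) = s \<and>
      (\<forall>i. Suc i < length \<tau>s \<longrightarrow> tr_source (\<tau>s ! Suc i) \<in># tr_target (\<tau>s ! i)) \<and>
      t \<in># tr_target (last \<tau>s))"

definition connected_from :: "trans multiset \<Rightarrow> nat \<Rightarrow> bool" where
  "connected_from D s \<longleftrightarrow> (\<forall>t\<in>msupp D. t = s \<or> reachable_in D s t)"

definition is_cycle :: "trans set \<Rightarrow> trans multiset \<Rightarrow> bool" where
  "is_cycle \<delta> D \<longleftrightarrow> set_mset D \<subseteq> \<delta> \<and> (\<exists>s. connected_from D s) \<and> msource D = mtarget D"

definition simple_cycle :: "trans set \<Rightarrow> trans multiset \<Rightarrow> bool" where
  "simple_cycle \<delta> D \<longleftrightarrow> D \<noteq> {#} \<and> is_cycle \<delta> D \<and>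
     \<not> (\<exists>Cs. length Cs \<ge> 2 \<and> (\<forall>C\<in>set Cs. C \<noteq> {#} \<and> is_cycle \<delta> C) \<and> D = sum_list Cs)"

definition is_run :: "trans set \<Rightarrow> nat \<Rightarrow> trans multiset \<Rightarrow> bool" where
  "is_run \<delta> s0 D \<longleftrightarrow> set_mset D \<subseteq> \<delta> \<and> connected_from D s0 \<and> msource D = mtarget D + {#s0#}"

definition skeleton_run :: "trans set \<Rightarrow> nat \<Rightarrow> trans multiset \<Rightarrow> bool" where
  "skeleton_run \<delta> s0 D \<longleftrightarrow> is_run \<delta> s0 D \<and>
     \<not> (\<exists>D1 C. is_run \<delta> s0 D1 \<and> C \<noteq> {#} \<and> is_cycle \<delta> C \<and> msupp D1 = msupp D \<and> D = D1 + C)"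

end

theory Submission
  imports Defs
begin

lemma msource_simps[simp]:
  "msource {#} = {#}" "msource (A + B) = msource A + msource B"
  "msource (add_mset x A) = add_mset (tr_source x) (msource A)"
  by (auto simp: msource_def)

lemma mtarget_simps[simp]:
  "mtarget {#} = {#}" "mtarget (A + B) = mtarget A + mtarget B"
  "mtarget (add_mset x A) = tr_target x + mtarget A"
  by (auto simp: mtarget_def)

inductive der :: "trans set \<Rightarrow> nat \<Rightarrow> nat multiset \<Rightarrow> trans multiset \<Rightarrow> bool" for \<delta> where
  leaf: "der \<delta> p {#p#} {#}"
| d0: "\<tau> \<in> \<delta> \<Longrightarrow> tr_source \<tau> = p \<Longrightarrow> tr_target \<tau> = {#} \<Longrightarrow> der \<delta> p {#} {#\<tau>#}"
| d1: "\<tau> \<in> \<delta> \<Longrightarrow> tr_source \<tau> = p \<Longrightarrow> tr_target \<tau> = {#r#} \<Longrightarrow> der \<delta> r T X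
       \<Longrightarrow> der \<delta> p T (add_mset \<tau> X)"
| d2: "\<tau> \<in> \<delta> \<Longrightarrow> tr_source \<tau> = p \<Longrightarrow> tr_target \<tau> = {#r1, r2#} \<Longrightarrow> der \<delta> r1 T1 X1
       \<Longrightarrow> der \<delta> r2 T2 X2 \<Longrightarrow> der \<delta> p (T1 + T2) (add_mset \<tau> (X1 + X2))"

lemma der_bal: "der \<delta> p T X \<Longrightarrow> msource X + T = {#p#} + mtarget X"
proof (induction rule: der.induct)
  case (d2 \<tau> p r1 r2 T1 X1 T2 X2)
  then show ?case by (simp add: add_ac)
qed (auto simp: add_ac)

lemma der_in: "der \<delta> p T X \<Longrightarrow> set_mset X \<subseteq> \<delta>"
  by (induction rule: der.induct) auto

lemma der_subst: "der \<delta> s T X \<Longrightarrow> p \<in># T \<Longrightarrow> der \<delta> p T' X' \<Longrightarrow> der \<delta> s (T - {#p#} + T') (X + X')"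
proof (induction arbitrary: T' X' rule: der.induct)
  case (leaf q)
  then show ?case by simp
next
  case (d0 \<tau> p) then show ?case by simp
next
  case (d1 \<tau> q r T X)
  then show ?case using der.d1[of \<tau> \<delta> q r "T - {#p#} + T'" "X + X'"] by simp
next
  case (d2 \<tau> q r1 r2 T1 X1 T2 X2)
  show ?case
  proof (cases "p \<in># T1")
    case True
    have "der \<delta> q ((T1 - {#p#} + T') + T2) (add_mset \<tau> ((X1 + X') + X2))"
      using d2 True by (intro der.d2) auto
    moreover have "T1 - {#p#} + T' + T2 = T1 + T2 - {#p#} + T'" using True
      by (simp add: add_ac)
    ultimately show ?thesis by (simp add: add_ac)
  next
    case False
    then have p2: "p \<in># T2" using d2 by auto
    have "der \<delta> q (T1 + (T2 - {#p#} + T')) (add_mset \<tau> (X1 + (X2 + X')))"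
      using d2 p2 by (intro der.d2) auto
    moreover have "T1 + (T2 - {#p#} + T') = T1 + T2 - {#p#} + T'" using p2
      by (metis add.assoc diff_union_single_conv)
    ultimately show ?thesis by (simp add: add_ac)
  qed
qed

lemma msupp_simps[simp]:
  "msupp {#} = {}" "msupp (A + B) = msupp A \<union> msupp B"
  "msupp (add_mset x A) = insert (tr_source x) (msupp A)"
  by (auto simp: msupp_def)

lemma msupp_mono: "A \<subseteq># B \<Longrightarrow> msupp A \<subseteq> msupp B"
  unfolding msupp_def msource_def by (meson image_mset_subseteq_mono set_mset_mono)

definition norep :: "trans multiset \<Rightarrow> bool" where
  "norep X \<longleftrightarrow> (\<forall>Y. Y \<subseteq># X \<longrightarrow> Y \<noteq> {#} \<longrightarrow> Y \<noteq> X \<longrightarrow> msource Y \<noteq> mtarget Y)"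

lemma norep_sub: "norep X \<Longrightarrow> Y \<subseteq># X \<Longrightarrow> norep Y"
  unfolding norep_def using subset_mset.trans subset_mset.antisym by blast

lemma der_diff_bal:
  assumes "der \<delta> p T X" "der \<delta> p T X'" "X' \<subseteq># X"
  shows "msource (X - X') = mtarget (X - X')"
proof -
  obtain Z where Z: "X = X' + Z" using assms(3) by (metis subset_mset.add_diff_inverse)
  have a: "msource Z + (msource X' + T) = mtarget Z + ({#p#} + mtarget X')"
    using der_bal[OF assms(1)] Z by (simp add: add_ac)
  have b: "msource X' + T = {#p#} + mtarget X'" using der_bal[OF assms(2)] .
  have "msource Z = mtarget Z" using a unfolding b by simp
  then show ?thesis using Z by simp
qed

lemma norep_contra:
  assumes "norep W" "der \<delta> p T W" "der \<delta> p T W'" "W' \<subseteq># W" "W' \<noteq> {#}" "W' \<noteq> W"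
  shows False
proof -
  have bal: "msource (W - W') = mtarget (W - W')" using der_diff_bal assms(2,3,4) by blast
  have "W - W' \<subseteq># W" by simp
  moreover have "W - W' \<noteq> {#}" using assms(4,6) Diff_eq_empty_iff_mset subset_mset.antisym by blast
  moreover have "size (W - W') < size W" using assms(4,5)
    using size_mset_mono[OF assms(4)] nonempty_has_size[of W'] by (simp add: size_Diff_submset)
  then have "W - W' \<noteq> W" by auto
  ultimately show False using assms(1) bal unfolding norep_def by blast
qed

lemma der_subtree: "der \<delta> r T X \<Longrightarrow> p \<in> msupp X \<Longrightarrow>
   \<exists>T' X'. der \<delta> p T' X' \<and> X' \<subseteq># X \<and> X' \<noteq> {#} \<and> T' \<subseteq># T"
proof (induction rule: der.induct)
  case (leaf p)
  then show ?case by simp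
next
  case (d0 \<tau> q)
  have "der \<delta> p {#} {#\<tau>#} \<and> {#\<tau>#} \<subseteq># {#\<tau>#} \<and> {#\<tau>#} \<noteq> {#} \<and> {#} \<subseteq># ({#}::nat multiset)"
    using d0 der.d0[OF d0(1,2,3)] by simp
  then show ?case by blast
next
  case (d1 \<tau> q r T X)
  show ?case
  proof (cases "p = q")
    case True
    have "der \<delta> p T (add_mset \<tau> X) \<and> add_mset \<tau> X \<subseteq># add_mset \<tau> X \<and> add_mset \<tau> X \<noteq> {#} \<and> T \<subseteq># T"
      using True der.d1[OF d1(1,2,3,4)] by simp
    then show ?thesis by blast
  next
    case False
    then have "p \<in> msupp X" using d1.prems d1.hyps(2) by simp
    then obtain T' X' where a: "der \<delta> p T' X'" "X' \<subseteq># X" "X' \<noteq> {#}" "T' \<subseteq># T" using d1.IH by blast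
    have "X \<subseteq># add_mset \<tau> X" by (metis add_mset_add_single mset_subset_eq_add_left)
    then have "X' \<subseteq># add_mset \<tau> X" using a(2) subset_mset.trans by blast
    then show ?thesis using a by blast
  qed
next
  case (d2 \<tau> q r1 r2 T1 X1 T2 X2)
  show ?case
  proof (cases "p = q")
    case True
    have "der \<delta> p (T1+T2) (add_mset \<tau> (X1+X2)) \<and> add_mset \<tau> (X1+X2) \<subseteq># add_mset \<tau> (X1+X2) \<and> add_mset \<tau> (X1+X2) \<noteq> {#} \<and> T1+T2 \<subseteq># T1+T2"
      using True der.d2[OF d2(1,2,3,4,5)] by simp
    then show ?thesis by blast
  next
    case False
    then have "p \<in> msupp X1 \<or> p \<in> msupp X2" using d2.prems d2.hyps(2) by simp
    then show ?thesis
    proof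
      assume "p \<in> msupp X1"
      then obtain T' X' where a: "der \<delta> p T' X'" "X' \<subseteq># X1" "X' \<noteq> {#}" "T' \<subseteq># T1" using d2.IH by blast
      have "X1 \<subseteq># add_mset \<tau> (X1 + X2)" by (metis add_mset_add_single mset_subset_eq_add_left union_assoc)
      then have "X' \<subseteq># add_mset \<tau> (X1 + X2)" using a(2) subset_mset.trans by blast
      moreover have "T1 \<subseteq># T1 + T2" by simp
      then have "T' \<subseteq># T1 + T2" using a(4) subset_mset.trans by blast
      ultimately show ?thesis using a by blast
    next
      assume "p \<in> msupp X2"
      then obtain T' X' where a: "der \<delta> p T' X'" "X' \<subseteq># X2" "X' \<noteq> {#}" "T' \<subseteq># T2" using d2.IH by blast
      have "X2 \<subseteq># add_mset \<tau> (X1 + X2)" by (metis add.commute add_mset_add_single mset_subset_eq_add_left union_assoc)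
      then have "X' \<subseteq># add_mset \<tau> (X1 + X2)" using a(2) subset_mset.trans by blast
      moreover have "T2 \<subseteq># T1 + T2" by simp
      then have "T' \<subseteq># T1 + T2" using a(4) subset_mset.trans by blast
      ultimately show ?thesis using a by blast
    qed
  qed
qed

lemma sub_add_mset: "X' \<subseteq># X \<Longrightarrow> X' \<noteq> add_mset t X"
  using mset_subset_size[of X "add_mset t X"] size_mset_mono[of X' X] by auto

lemma sub_add_mset2: "X' \<subseteq># X1 \<Longrightarrow> X' \<noteq> add_mset t (X1 + X2)"
  using size_mset_mono[of X' X1] by auto

lemma sub_add_mset3: "X' \<subseteq># X2 \<Longrightarrow> X' \<noteq> add_mset t (X1 + X2)"
  using size_mset_mono[of X' X2] by auto

lemma subA: "X \<subseteq># add_mset t X" by (metis add_mset_add_single mset_subset_eq_add_left)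
lemma subL: "X1 \<subseteq># add_mset t (X1 + X2)" by (metis add_mset_add_single mset_subset_eq_add_left union_assoc)
lemma subR: "X2 \<subseteq># add_mset t (X1 + X2)" by (metis add.commute add_mset_add_single mset_subset_eq_add_left union_assoc)

lemma comp_bound: "der \<delta> p T X \<Longrightarrow> T = {#} \<Longrightarrow> norep X \<Longrightarrow> size X < 2 ^ card (msupp X)"
proof (induction rule: der.induct)
  case (leaf p)
  then show ?case by simp
next
  case (d0 \<tau> p)
  then show ?case by simp
next
  case (d1 \<tau> q r T X)
  have W: "der \<delta> q T (add_mset \<tau> X)" using der.d1[OF d1(1,2,3,4)] .
  have nX: "norep X" using norep_sub[OF d1.prems(2) subA] .
  have IH: "size X < 2 ^ card (msupp X)" using d1.IH d1.prems(1) nX by blast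
  have "q \<notin> msupp X"
  proof
    assume "q \<in> msupp X"
    then obtain T' X' where a: "der \<delta> q T' X'" "X' \<subseteq># X" "X' \<noteq> {#}" "T' \<subseteq># T"
      using der_subtree[OF d1(4)] by blast
    have "T' = T" using a(4) d1.prems(1) by simp
    have "X' \<subseteq># add_mset \<tau> X" using subset_mset.trans[OF a(2) subA] .
    moreover have "X' \<noteq> add_mset \<tau> X" using sub_add_mset[OF a(2)] .
    moreover have "der \<delta> q T X'" using a(1) \<open>T' = T\<close> by simp
    ultimately show False using norep_contra[OF d1.prems(2) W _ _ a(3)] by simp
  qed
  then have "card (msupp (add_mset \<tau> X)) = Suc (card (msupp X))" using d1(2) by (simp add: msupp_def)
  then show ?case using IH by simp
next
  case (d2 \<tau> q r1 r2 T1 X1 T2 X2)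
  have W: "der \<delta> q (T1+T2) (add_mset \<tau> (X1+X2))" using der.d2[OF d2(1,2,3,4,5)] .
  have e: "T1 = {#}" "T2 = {#}" using d2.prems(1) by auto
  have n1: "norep X1" using norep_sub[OF d2.prems(2) subL] .
  have n2: "norep X2" using norep_sub[OF d2.prems(2) subR] .
  have IH1: "size X1 < 2 ^ card (msupp X1)" using d2.IH(1) e n1 by blast
  have IH2: "size X2 < 2 ^ card (msupp X2)" using d2.IH(2) e n2 by blast
  have nq1: "q \<notin> msupp X1"
  proof
    assume "q \<in> msupp X1"
    then obtain T' X' where a: "der \<delta> q T' X'" "X' \<subseteq># X1" "X' \<noteq> {#}" "T' \<subseteq># T1"
      using der_subtree[OF d2(4)] by blast
    have "T' = T1 + T2" using a(4) e by simp
    have "X' \<subseteq># add_mset \<tau> (X1 + X2)" using subset_mset.trans[OF a(2) subL] .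
    moreover have "X' \<noteq> add_mset \<tau> (X1 + X2)" using sub_add_mset2[OF a(2)] .
    moreover have "der \<delta> q (T1+T2) X'" using a(1) \<open>T' = T1 + T2\<close> by simp
    ultimately show False using norep_contra[OF d2.prems(2) W _ _ a(3)] by simp
  qed
  have nq2: "q \<notin> msupp X2"
  proof
    assume "q \<in> msupp X2"
    then obtain T' X' where a: "der \<delta> q T' X'" "X' \<subseteq># X2" "X' \<noteq> {#}" "T' \<subseteq># T2"
      using der_subtree[OF d2(5)] by blast
    have "T' = T1 + T2" using a(4) e by simp
    have "X' \<subseteq># add_mset \<tau> (X1 + X2)" using subset_mset.trans[OF a(2) subR] .
    moreover have "X' \<noteq> add_mset \<tau> (X1 + X2)" using sub_add_mset3[OF a(2)] .
    moreover have "der \<delta> q (T1+T2) X'" using a(1) \<open>T' = T1 + T2\<close> by simp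
    ultimately show False using norep_contra[OF d2.prems(2) W _ _ a(3)] by simp
  qed
  define c where "c = card (msupp X1 \<union> msupp X2)"
  have c1: "card (msupp X1) \<le> c" unfolding c_def by (intro card_mono) (auto simp: msupp_def)
  have c2: "card (msupp X2) \<le> c" unfolding c_def by (intro card_mono) (auto simp: msupp_def)
  have "(2::nat) ^ card (msupp X1) \<le> 2 ^ c" using c1 by (simp add: power_increasing)
  moreover have "(2::nat) ^ card (msupp X2) \<le> 2 ^ c" using c2 by (simp add: power_increasing)
  ultimately have "size X1 < 2^c" "size X2 < 2^c" using IH1 IH2 by linarith+
  then have "size (add_mset \<tau> (X1 + X2)) < 2 ^ Suc c" by simp
  moreover have "card (msupp (add_mset \<tau> (X1 + X2))) = Suc c"
    using nq1 nq2 d2(2) unfolding c_def by (simp add: msupp_def)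
  ultimately show ?case by simp
qed

lemma spine_bound:
  "der \<delta> p T X \<Longrightarrow> T = {#q#} \<Longrightarrow> norep X \<Longrightarrow> msupp X \<subseteq> S \<Longrightarrow> finite S \<Longrightarrow>
   \<exists>P. P \<subseteq> S \<and> size X \<le> card P * 2 ^ card S \<and> (\<forall>r\<in>P. \<exists>X'. X' \<subseteq># X \<and> X' \<noteq> {#} \<and> der \<delta> r {#q#} X')"
proof (induction rule: der.induct)
  case (leaf p)
  then show ?case by (intro exI[of _ "{}"]) simp
next
  case (d0 \<tau> p)
  then show ?case by simp
next
  case (d1 \<tau> pp r T X)
  have W: "der \<delta> pp T (add_mset \<tau> X)" using der.d1[OF d1(1,2,3,4)] .
  have nX: "norep X" using norep_sub[OF d1.prems(2) subA] .
  have sX: "msupp X \<subseteq> S" using d1.prems(3) by simp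
  obtain P1 where P1: "P1 \<subseteq> S" "size X \<le> card P1 * 2 ^ card S"
     "\<forall>r\<in>P1. \<exists>X'. X' \<subseteq># X \<and> X' \<noteq> {#} \<and> der \<delta> r {#q#} X'"
    using d1.IH[OF d1.prems(1) nX sX d1.prems(4)] by blast
  have npp: "pp \<notin> P1"
  proof
    assume "pp \<in> P1"
    then obtain X' where a: "X' \<subseteq># X" "X' \<noteq> {#}" "der \<delta> pp {#q#} X'" using P1(3) by blast
    have "X' \<subseteq># add_mset \<tau> X" using subset_mset.trans[OF a(1) subA] .
    moreover have "X' \<noteq> add_mset \<tau> X" using sub_add_mset[OF a(1)] .
    moreover have "der \<delta> pp T X'" using a(3) d1.prems(1) by simp
    ultimately show False using norep_contra[OF d1.prems(2) W _ _ a(2)] by simp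
  qed
  have ppS: "pp \<in> S" using d1.prems(3) d1(2) by simp
  have fP1: "finite P1" using P1(1) d1.prems(4) finite_subset by blast
  have "card (insert pp P1) = Suc (card P1)" using npp fP1 by simp
  then have e1: "card (insert pp P1) * 2 ^ card S = 2 ^ card S + card P1 * 2 ^ card S" by simp
  have one: "(1::nat) \<le> 2 ^ card S" by simp
  have "size (add_mset \<tau> X) = Suc (size X)" by simp
  then have "size (add_mset \<tau> X) \<le> card (insert pp P1) * 2 ^ card S" using P1(2) e1 one by linarith
  moreover have "\<forall>r\<in>insert pp P1. \<exists>X'. X' \<subseteq># add_mset \<tau> X \<and> X' \<noteq> {#} \<and> der \<delta> r {#q#} X'"
  proof
    fix r assume "r \<in> insert pp P1"
    then show "\<exists>X'. X' \<subseteq># add_mset \<tau> X \<and> X' \<noteq> {#} \<and> der \<delta> r {#q#} X'"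
    proof
      assume "r = pp"
      then show ?thesis using W d1.prems(1) by (intro exI[of _ "add_mset \<tau> X"]) simp
    next
      assume "r \<in> P1"
      then obtain X' where a: "X' \<subseteq># X" "X' \<noteq> {#}" "der \<delta> r {#q#} X'" using P1(3) by blast
      then show ?thesis using subset_mset.trans[OF a(1) subA] by blast
    qed
  qed
  ultimately show ?case using P1(1) ppS by (intro exI[of _ "insert pp P1"]) simp
next
  case (d2 \<tau> pp r1 r2 T1 X1 T2 X2)
  have W: "der \<delta> pp (T1+T2) (add_mset \<tau> (X1+X2))" using der.d2[OF d2(1,2,3,4,5)] .
  have n1: "norep X1" using norep_sub[OF d2.prems(2) subL] .
  have n2: "norep X2" using norep_sub[OF d2.prems(2) subR] .
  have s1: "msupp X1 \<subseteq> S" using d2.prems(3) by simp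
  have s2: "msupp X2 \<subseteq> S" using d2.prems(3) by simp
  have ppS: "pp \<in> S" using d2.prems(3) d2(2) by simp
  have cases: "(T1 = {#q#} \<and> T2 = {#}) \<or> (T1 = {#} \<and> T2 = {#q#})" using d2.prems(1) union_is_single by metis
  then show ?case
  proof
    assume e: "T1 = {#q#} \<and> T2 = {#}"
    obtain P1 where P1: "P1 \<subseteq> S" "size X1 \<le> card P1 * 2 ^ card S"
       "\<forall>r\<in>P1. \<exists>X'. X' \<subseteq># X1 \<and> X' \<noteq> {#} \<and> der \<delta> r {#q#} X'"
      using d2.IH(1) e n1 s1 d2.prems(4) by blast
    have c2: "size X2 < 2 ^ card (msupp X2)" using comp_bound[OF d2(5)] e n2 by blast
    have "card (msupp X2) \<le> card S" using s2 d2.prems(4) card_mono by blast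
    then have "(2::nat) ^ card (msupp X2) \<le> 2 ^ card S" by (simp add: power_increasing)
    then have c2': "size X2 < 2 ^ card S" using c2 by linarith
    have npp: "pp \<notin> P1"
    proof
      assume "pp \<in> P1"
      then obtain X' where a: "X' \<subseteq># X1" "X' \<noteq> {#}" "der \<delta> pp {#q#} X'" using P1(3) by blast
      have "X' \<subseteq># add_mset \<tau> (X1+X2)" using subset_mset.trans[OF a(1) subL] .
      moreover have "X' \<noteq> add_mset \<tau> (X1+X2)" using sub_add_mset2[OF a(1)] .
      moreover have "der \<delta> pp (T1+T2) X'" using a(3) e by simp
      ultimately show False using norep_contra[OF d2.prems(2) W _ _ a(2)] by simp
    qed
    have fP1: "finite P1" using P1(1) d2.prems(4) finite_subset by blast
    have "card (insert pp P1) = Suc (card P1)" using npp fP1 by simp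
    then have "size (add_mset \<tau> (X1+X2)) \<le> card (insert pp P1) * 2 ^ card S" using P1(2) c2' by simp
    moreover have "\<forall>r\<in>insert pp P1. \<exists>X'. X' \<subseteq># add_mset \<tau> (X1+X2) \<and> X' \<noteq> {#} \<and> der \<delta> r {#q#} X'"
    proof
      fix r assume "r \<in> insert pp P1"
      then show "\<exists>X'. X' \<subseteq># add_mset \<tau> (X1+X2) \<and> X' \<noteq> {#} \<and> der \<delta> r {#q#} X'"
      proof
        assume "r = pp"
        then show ?thesis using W e by (intro exI[of _ "add_mset \<tau> (X1+X2)"]) simp
      next
        assume "r \<in> P1"
        then obtain X' where a: "X' \<subseteq># X1" "X' \<noteq> {#}" "der \<delta> r {#q#} X'" using P1(3) by blast
        then show ?thesis using subset_mset.trans[OF a(1) subL] by blast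
      qed
    qed
    ultimately show ?thesis using P1(1) ppS by (intro exI[of _ "insert pp P1"]) simp
  next
    assume e: "T1 = {#} \<and> T2 = {#q#}"
    obtain P1 where P1: "P1 \<subseteq> S" "size X2 \<le> card P1 * 2 ^ card S"
       "\<forall>r\<in>P1. \<exists>X'. X' \<subseteq># X2 \<and> X' \<noteq> {#} \<and> der \<delta> r {#q#} X'"
      using d2.IH(2) e n2 s2 d2.prems(4) by blast
    have c2: "size X1 < 2 ^ card (msupp X1)" using comp_bound[OF d2(4)] e n1 by blast
    have "card (msupp X1) \<le> card S" using s1 d2.prems(4) card_mono by blast
    then have "(2::nat) ^ card (msupp X1) \<le> 2 ^ card S" by (simp add: power_increasing)
    then have c2': "size X1 < 2 ^ card S" using c2 by linarith
    have npp: "pp \<notin> P1"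
    proof
      assume "pp \<in> P1"
      then obtain X' where a: "X' \<subseteq># X2" "X' \<noteq> {#}" "der \<delta> pp {#q#} X'" using P1(3) by blast
      have "X' \<subseteq># add_mset \<tau> (X1+X2)" using subset_mset.trans[OF a(1) subR] .
      moreover have "X' \<noteq> add_mset \<tau> (X1+X2)" using sub_add_mset3[OF a(1)] .
      moreover have "der \<delta> pp (T1+T2) X'" using a(3) e by simp
      ultimately show False using norep_contra[OF d2.prems(2) W _ _ a(2)] by simp
    qed
    have fP1: "finite P1" using P1(1) d2.prems(4) finite_subset by blast
    have "card (insert pp P1) = Suc (card P1)" using npp fP1 by simp
    then have "size (add_mset \<tau> (X1+X2)) \<le> card (insert pp P1) * 2 ^ card S" using P1(2) c2' by simp
    moreover have "\<forall>r\<in>insert pp P1. \<exists>X'. X' \<subseteq># add_mset \<tau> (X1+X2) \<and> X' \<noteq> {#} \<and> der \<delta> r {#q#} X'"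
    proof
      fix r assume "r \<in> insert pp P1"
      then show "\<exists>X'. X' \<subseteq># add_mset \<tau> (X1+X2) \<and> X' \<noteq> {#} \<and> der \<delta> r {#q#} X'"
      proof
        assume "r = pp"
        then show ?thesis using W e by (intro exI[of _ "add_mset \<tau> (X1+X2)"]) simp
      next
        assume "r \<in> P1"
        then obtain X' where a: "X' \<subseteq># X2" "X' \<noteq> {#}" "der \<delta> r {#q#} X'" using P1(3) by blast
        then show ?thesis using subset_mset.trans[OF a(1) subR] by blast
      qed
    qed
    ultimately show ?thesis using P1(1) ppS by (intro exI[of _ "insert pp P1"]) simp
  qed
qed

lemma reach_single: "\<tau> \<in># X \<Longrightarrow> t \<in># tr_target \<tau> \<Longrightarrow> reachable_in X (tr_source \<tau>) t"
  unfolding reachable_in_def by (intro exI[of _ "[\<tau>]"]) simp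

lemma reach_cons:
  assumes "\<tau> \<in># X" "r \<in># tr_target \<tau>" "reachable_in X r t"
  shows "reachable_in X (tr_source \<tau>) t"
proof -
  obtain ts where ts: "ts \<noteq> []" "set ts \<subseteq> set_mset X" "tr_source (hd ts) = r"
    "\<forall>i. Suc i < length ts \<longrightarrow> tr_source (ts ! Suc i) \<in># tr_target (ts ! i)"
    "t \<in># tr_target (last ts)"
    using assms(3) unfolding reachable_in_def by blast
  have "\<forall>i. Suc i < length (\<tau> # ts) \<longrightarrow> tr_source ((\<tau> # ts) ! Suc i) \<in># tr_target ((\<tau> # ts) ! i)"
  proof (intro allI impI)
    fix i assume "Suc i < length (\<tau> # ts)"
    then show "tr_source ((\<tau> # ts) ! Suc i) \<in># tr_target ((\<tau> # ts) ! i)"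
      using ts assms(2) by (cases i) (auto simp: hd_conv_nth)
  qed
  then show ?thesis unfolding reachable_in_def using ts assms(1)
    by (intro exI[of _ "\<tau> # ts"]) auto
qed

lemma reach_mono: "reachable_in X p t \<Longrightarrow> set_mset X \<subseteq> set_mset Y \<Longrightarrow> reachable_in Y p t"
  unfolding reachable_in_def by blast

lemma der_conn: "der \<delta> p T X \<Longrightarrow> t \<in> msupp X \<Longrightarrow> t = p \<or> reachable_in X p t"
proof (induction rule: der.induct)
  case (leaf p)
  then show ?case by simp
next
  case (d0 \<tau> p)
  then show ?case by simp
next
  case (d1 \<tau> p r T X)
  show ?case
  proof (cases "t = p")
    case False
    then have "t \<in> msupp X" using d1 by simp
    then have "t = r \<or> reachable_in X r t" using d1.IH by blast
    moreover have "reachable_in (add_mset \<tau> X) p r" using reach_single[of \<tau> "add_mset \<tau> X" r] d1(2,3) by simp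
    moreover have "reachable_in X r t \<Longrightarrow> reachable_in (add_mset \<tau> X) p t"
      using reach_cons[of \<tau> "add_mset \<tau> X" r t] reach_mono[of X r t "add_mset \<tau> X"] d1(2,3) by auto
    ultimately show ?thesis by blast
  qed simp
next
  case (d2 \<tau> p r1 r2 T1 X1 T2 X2)
  let ?W = "add_mset \<tau> (X1 + X2)"
  show ?case
  proof (cases "t = p")
    case False
    then have "t \<in> msupp X1 \<or> t \<in> msupp X2" using d2 by simp
    then have "t = r1 \<or> reachable_in X1 r1 t \<or> t = r2 \<or> reachable_in X2 r2 t" using d2.IH by blast
    moreover have "reachable_in ?W p r1" using reach_single[of \<tau> ?W r1] d2(2,3) by simp
    moreover have "reachable_in ?W p r2" using reach_single[of \<tau> ?W r2] d2(2,3) by simp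
    moreover have "reachable_in X1 r1 t \<Longrightarrow> reachable_in ?W p t"
      using reach_cons[of \<tau> ?W r1 t] reach_mono[of X1 r1 t ?W] d2(2,3) by auto
    moreover have "reachable_in X2 r2 t \<Longrightarrow> reachable_in ?W p t"
      using reach_cons[of \<tau> ?W r2 t] reach_mono[of X2 r2 t ?W] d2(2,3) by auto
    ultimately show ?thesis by blast
  qed simp
qed

lemma der_cycle: "der \<delta> p {#p#} X \<Longrightarrow> X \<noteq> {#} \<Longrightarrow> is_cycle \<delta> X"
  unfolding is_cycle_def connected_from_def
  using der_in[of \<delta> p "{#p#}" X] der_conn[of \<delta> p "{#p#}" X] der_bal[of \<delta> p "{#p#}" X]
  by (auto simp: add.commute)

type_synonym macro = "nat \<times> nat multiset \<times> trans multiset"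

definition msrcM :: "macro multiset \<Rightarrow> nat multiset" where "msrcM M = image_mset fst M"
definition mtgtM :: "macro multiset \<Rightarrow> nat multiset" where "mtgtM M = sum_mset (image_mset (\<lambda>m. fst (snd m)) M)"
definition mcont :: "macro multiset \<Rightarrow> trans multiset" where "mcont M = sum_mset (image_mset (\<lambda>m. snd (snd m)) M)"
definition valid :: "trans set \<Rightarrow> macro \<Rightarrow> bool" where
  "valid \<delta> m \<longleftrightarrow> der \<delta> (fst m) (fst (snd m)) (snd (snd m)) \<and> snd (snd m) \<noteq> {#} \<and> size (fst (snd m)) \<le> 2"

lemma macro_simps[simp]:
  "msrcM {#} = {#}" "msrcM (add_mset m M) = add_mset (fst m) (msrcM M)"
  "mtgtM {#} = {#}" "mtgtM (add_mset m M) = fst (snd m) + mtgtM M"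
  "mcont {#} = {#}" "mcont (add_mset m M) = snd (snd m) + mcont M"
  by (auto simp: msrcM_def mtgtM_def mcont_def)

lemma size_msrcM[simp]: "size (msrcM M) = size M" by (simp add: msrcM_def)

lemma mtgtM_two: "(\<forall>m\<in>#M. size (fst (snd m)) = 2) \<Longrightarrow> size (mtgtM M) = 2 * size M"
  by (induction M) auto

lemma mem_sum_mset_ex: "x \<in># sum_mset (image_mset f M) \<Longrightarrow> \<exists>m\<in>#M. x \<in># f m"
proof (induction M)
  case empty
  then show ?case by simp
next
  case (add m M)
  then have "x \<in># f m \<or> x \<in># sum_mset (image_mset f M)" by simp
  then show ?case
  proof
    assume "x \<in># f m" then show ?thesis by simp
  next
    assume "x \<in># sum_mset (image_mset f M)"
    then obtain m' where a: "m' \<in># M" "x \<in># f m'" using add.IH by blast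
    have "m' \<in># add_mset m M" using a(1) by simp
    then show ?thesis using a(2) by blast
  qed
qed

lemma mem_mtgtM: "x \<in># mtgtM M \<Longrightarrow> \<exists>m\<in>#M. x \<in># fst (snd m)"
  unfolding mtgtM_def by (rule mem_sum_mset_ex)

lemma mcont_mem: assumes "m \<in># M" shows "snd (snd m) \<subseteq># mcont M"
proof -
  obtain M' where "M = add_mset m M'" using multi_member_split[OF assms] by blast
  then show ?thesis using mset_subset_eq_add_left[of "snd (snd m)" "mcont M'"] by simp
qed

lemma size_le1_mem: assumes a: "size T \<le> 1" "p \<in># T" shows "T = {#p#}"
proof -
  obtain T' where T: "T = add_mset p T'" using multi_member_split[OF a(2)] by blast
  then have "size T' = 0" using a(1) by (simp del: size_eq_0_iff_empty)
  then show ?thesis using T by simp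
qed

lemma macro_main:
  assumes "\<forall>m\<in>#M. valid \<delta> m" "msrcM M = mtgtM M + Z" "(Z = {#} \<and> M \<noteq> {#}) \<or> Z = {#s0#}"
  shows "(\<exists>p X. der \<delta> p {#p#} X \<and> X \<noteq> {#} \<and> X \<subseteq># mcont M) \<or> (Z = {#s0#} \<and> der \<delta> s0 {#} (mcont M))"
  using assms
proof (induction "size M" arbitrary: M rule: less_induct)
  case less
  show ?case
  proof (cases "\<exists>m\<in>#M. fst (snd m) = {#fst m#}")
    case True
    then obtain m where m: "m \<in># M" "fst (snd m) = {#fst m#}" by blast
    have v: "valid \<delta> m" using less.prems(1) m(1) by blast
    have "der \<delta> (fst m) {#fst m#} (snd (snd m))" "snd (snd m) \<noteq> {#}"
      using v m(2) unfolding valid_def by auto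
    then show ?thesis using mcont_mem[OF m(1)] by blast
  next
    case nA: False
    show ?thesis
    proof (cases "\<exists>m\<in>#M. size (fst (snd m)) \<le> 1 \<and> fst m \<in># mtgtM M")
      case True
      then obtain m0 where m0: "m0 \<in># M" "size (fst (snd m0)) \<le> 1" "fst m0 \<in># mtgtM M" by blast
      obtain p T0 X0 where m0d: "m0 = (p, T0, X0)" by (cases m0) blast
      obtain M1 where M1: "M = add_mset m0 M1" using multi_member_split[OF m0(1)] by blast
      have v0: "der \<delta> p T0 X0" "X0 \<noteq> {#}" "size T0 \<le> 1"
        using less.prems(1) m0(1,2) m0d unfolding valid_def by auto
      have pT0: "\<not> p \<in># T0"
      proof
        assume "p \<in># T0"
        then have "T0 = {#p#}" using size_le1_mem[OF v0(3)] by blast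
        then show False using nA m0(1) m0d by auto
      qed
      have "mtgtM M = T0 + mtgtM M1" using M1 m0d by simp
      then have "p \<in># mtgtM M1" using m0(3) m0d pT0 by simp
      then obtain m1 where m1: "m1 \<in># M1" "p \<in># fst (snd m1)" using mem_mtgtM by blast
      obtain s1 T1 X1 where m1d: "m1 = (s1, T1, X1)" by (cases m1) blast
      obtain M2 where M2: "M1 = add_mset m1 M2" using multi_member_split[OF m1(1)] by blast
      have v1: "der \<delta> s1 T1 X1" "X1 \<noteq> {#}" "size T1 \<le> 2"
        using less.prems(1) m1(1) m1d M1 unfolding valid_def by auto
      have pT1: "p \<in># T1" using m1(2) m1d by simp
      define m01 where "m01 = (s1, T1 - {#p#} + T0, X1 + X0)"
      define M' where "M' = add_mset m01 M2"
      have d01: "der \<delta> s1 (T1 - {#p#} + T0) (X1 + X0)" using der_subst[OF v1(1) pT1 v0(1)] .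
      have sT1: "0 < size T1" using pT1 by (metis nonempty_has_size empty_iff set_mset_empty)
      have "size (T1 - {#p#}) = size T1 - 1" using pT1 by (simp add: size_Diff_singleton)
      then have "size (T1 - {#p#} + T0) \<le> 2" using v0(3) v1(3) sT1 by simp
      then have vm: "valid \<delta> m01" unfolding valid_def m01_def using d01 v1(2) by simp
      have vM': "\<forall>m\<in>#M'. valid \<delta> m"
        using less.prems(1) vm unfolding M'_def M1 M2 by auto
      have T1e: "T1 = add_mset p (T1 - {#p#})" using pT1 by simp
      have src: "msrcM M = add_mset p (msrcM M')" unfolding M1 M2 M'_def m0d m1d m01_def by simp
      have tgt: "mtgtM M = add_mset p (mtgtM M')" unfolding M1 M2 M'_def m0d m1d m01_def
        by (subst T1e) (simp add: add_ac)
      have bal: "msrcM M' = mtgtM M' + Z" using less.prems(2) unfolding src tgt by simp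
      have cont: "mcont M' = mcont M" unfolding M1 M2 M'_def m0d m1d m01_def by (simp add: add_ac)
      have sz: "size M' < size M" unfolding M1 M2 M'_def by simp
      have zc: "(Z = {#} \<and> M' \<noteq> {#}) \<or> Z = {#s0#}" using less.prems(3) unfolding M'_def by auto
      show ?thesis using less.hyps[OF sz vM' bal zc] unfolding cont .
    next
      case nB: False
      have key: "\<And>m. m \<in># M \<Longrightarrow> size (fst (snd m)) \<le> 1 \<Longrightarrow> count (msrcM M) (fst m) = count Z (fst m)"
      proof -
        fix m assume a: "m \<in># M" "size (fst (snd m)) \<le> 1"
        then have "count (mtgtM M) (fst m) = 0" using nB by (meson not_in_iff)
        then show "count (msrcM M) (fst m) = count Z (fst m)" using less.prems(2) by simp
      qed
      show ?thesis
      proof (cases "\<exists>m\<in>#M. size (fst (snd m)) \<le> 1")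
        case True
        then obtain m0 where m0: "m0 \<in># M" "size (fst (snd m0)) \<le> 1" by blast
        obtain p T0 X0 where m0d: "m0 = (p, T0, X0)" by (cases m0) blast
        obtain M1 where M1: "M = add_mset m0 M1" using multi_member_split[OF m0(1)] by blast
        have v0: "der \<delta> p T0 X0" "X0 \<noteq> {#}" "size T0 \<le> 1"
          using less.prems(1) m0(1,2) m0d unfolding valid_def by auto
        have c1: "count (msrcM M) p = count Z p" using key[OF m0] m0d by simp
        have c2: "count (msrcM M) p = Suc (count (msrcM M1) p)" unfolding M1 m0d by simp
        have Zs: "Z = {#s0#}" using less.prems(3) c1 c2 by auto
        then have ps: "p = s0" using c1 c2 by (metis count_single less_numeral_extra(3) zero_less_Suc)
        have c3: "count (msrcM M1) p = 0" using c1 c2 Zs ps by simp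
        have all2: "\<forall>m\<in>#M1. size (fst (snd m)) = 2"
        proof
          fix m assume mM1: "m \<in># M1"
          then have mM: "m \<in># M" unfolding M1 by simp
          have le2: "size (fst (snd m)) \<le> 2" using less.prems(1) mM unfolding valid_def by auto
          show "size (fst (snd m)) = 2"
          proof (rule ccontr)
            assume "size (fst (snd m)) \<noteq> 2"
            then have le1: "size (fst (snd m)) \<le> 1" using le2 by simp
            have "fst m \<in># msrcM M" using mM unfolding msrcM_def by simp
            then have "count Z (fst m) > 0" using key[OF mM le1] count_greater_zero_iff[of "msrcM M" "fst m"] by simp
            then have "fst m = p" using Zs ps by (simp split: if_splits)
            moreover have "fst m \<in># msrcM M1" using mM1 unfolding msrcM_def by simp
            ultimately show False using c3 count_greater_zero_iff[of "msrcM M1" p] by simp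
          qed
        qed
        have "size (msrcM M) = size (mtgtM M) + size Z" using less.prems(2) by (metis size_union)
        moreover have "size (mtgtM M) = size T0 + 2 * size M1" unfolding M1 m0d using mtgtM_two[OF all2] by simp
        moreover have "size (msrcM M) = Suc (size M1)" unfolding M1 by simp
        ultimately have "size M1 = 0" "size T0 = 0" using Zs by simp_all
        then have "M1 = {#}" "T0 = {#}" by auto
        then have "mcont M = X0" unfolding M1 m0d by simp
        then show ?thesis using v0(1) \<open>T0 = {#}\<close> ps Zs by simp
      next
        case False
        have all2: "\<forall>m\<in>#M. size (fst (snd m)) = 2"
        proof
          fix m assume mM: "m \<in># M"
          have "size (fst (snd m)) \<le> 2" using less.prems(1) mM unfolding valid_def by auto
          moreover have "\<not> size (fst (snd m)) \<le> 1" using False mM by blast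
          ultimately show "size (fst (snd m)) = 2" by simp
        qed
        have "size (msrcM M) = size (mtgtM M) + size Z" using less.prems(2) by (metis size_union)
        then have "size M = 2 * size M + size Z" using mtgtM_two[OF all2] by simp
        then have "M = {#}" "Z = {#}" by auto
        then show ?thesis using less.prems(3) by simp
      qed
    qed
  qed
qed

definition good :: "trans set \<Rightarrow> nat set \<Rightarrow> bool" where
  "good \<delta> S \<longleftrightarrow> (\<forall>\<tau>\<in>\<delta>. tr_source \<tau> \<in> S \<and> set_mset (tr_target \<tau>) \<subseteq> S \<and> size (tr_target \<tau>) \<le> 2
     \<and> size (tr_out \<tau>) \<le> 1)"

lemma size_le2_cases:
  assumes "size (T::nat multiset) \<le> 2"
  shows "T = {#} \<or> (\<exists>r. T = {#r#}) \<or> (\<exists>r1 r2. T = {#r1, r2#})"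
proof (cases "T = {#}")
  case False
  then obtain r1 where "r1 \<in># T" by (rule multiset_nonemptyE)
  then obtain T' where T: "T = add_mset r1 T'" using multi_member_split by metis
  show ?thesis
  proof (cases "T' = {#}")
    case True then have "T = {#r1#}" using T by simp
    then show ?thesis by blast
  next
    case False
    then have "size T' \<ge> 1" by (simp add: Suc_leI nonempty_has_size)
    moreover have "size T' \<le> 1" using assms T by simp
    ultimately have "size T' = 1" by simp
    then obtain r2 where "T' = {#r2#}" using size_1_singleton_mset by blast
    then have "T = {#r1, r2#}" using T by simp
    then show ?thesis by blast
  qed
qed simp

lemma single_der:
  assumes "\<tau> \<in> \<delta>" "size (tr_target \<tau>) \<le> 2"
  shows "der \<delta> (tr_source \<tau>) (tr_target \<tau>) {#\<tau>#}"
proof -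
  consider "tr_target \<tau> = {#}" | r where "tr_target \<tau> = {#r#}" | r1 r2 where "tr_target \<tau> = {#r1, r2#}"
    using size_le2_cases[OF assms(2)] by blast
  then show ?thesis
  proof cases
    case 1 then show ?thesis using der.d0[OF assms(1) refl] by simp
  next
    case (2 r) then show ?thesis using der.d1[OF assms(1) refl _ der.leaf[of \<delta> r]] by simp
  next
    case (3 r1 r2)
    have d: "der \<delta> (tr_source \<tau>) ({#r1#} + {#r2#}) (add_mset \<tau> ({#} + {#}))"
      using der.d2[OF assms(1) refl 3 der.leaf[of \<delta> r1] der.leaf[of \<delta> r2]] .
    have e: "{#r1#} + {#r2#} = tr_target \<tau>" unfolding 3 by (simp add: add_mset_commute)
    show ?thesis using d unfolding e by simp
  qed
qed

definition M0 :: "trans multiset \<Rightarrow> macro multiset" where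
  "M0 E = image_mset (\<lambda>\<tau>. (tr_source \<tau>, tr_target \<tau>, {#\<tau>#})) E"

lemma M0_props: "msrcM (M0 E) = msource E" "mtgtM (M0 E) = mtarget E" "mcont (M0 E) = E"
  by (induction E) (auto simp: M0_def)

lemma M0_valid:
  assumes "set_mset E \<subseteq> \<delta>" "good \<delta> S"
  shows "\<forall>m\<in>#M0 E. valid \<delta> m"
proof
  fix m assume "m \<in># M0 E"
  then obtain \<tau> where t: "\<tau> \<in># E" "m = (tr_source \<tau>, tr_target \<tau>, {#\<tau>#})" unfolding M0_def by auto
  then have "\<tau> \<in> \<delta>" using assms(1) by blast
  then have "size (tr_target \<tau>) \<le> 2" using assms(2) unfolding good_def by blast
  then show "valid \<delta> m" unfolding valid_def t(2) using single_der[OF \<open>\<tau> \<in> \<delta>\<close>] by simp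
qed

lemma msupp_S: "set_mset X \<subseteq> \<delta> \<Longrightarrow> good \<delta> S \<Longrightarrow> msupp X \<subseteq> S"
  unfolding msupp_def msource_def good_def by auto

lemma sub_eq_size: "X \<subseteq># C \<Longrightarrow> size C \<le> size X \<Longrightarrow> X = C"
  using mset_subset_size[of X C] by (metis leD subset_mset.le_imp_less_or_eq)

lemma core_cycle:
  assumes g: "good \<delta> S" and fS: "finite S" and Yd: "set_mset Y \<subseteq> \<delta>" and Yn: "Y \<noteq> {#}"
    and Yb: "msource Y = mtarget Y"
  shows "\<exists>C. C \<subseteq># Y \<and> C \<noteq> {#} \<and> is_cycle \<delta> C \<and> size C \<le> card S * 2 ^ card S"
proof -
  let ?P = "\<lambda>C. C \<subseteq># Y \<and> C \<noteq> {#} \<and> msource C = mtarget C"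
  have "?P Y" using Yn Yb by simp
  then obtain C where C: "?P C" and Cmin: "\<And>C'. ?P C' \<Longrightarrow> size C \<le> size C'"
    using ex_has_least_nat[of ?P Y size] by blast
  have Cd: "set_mset C \<subseteq> \<delta>" using C Yd by (meson set_mset_mono subset_trans)
  have vM: "\<forall>m\<in>#M0 C. valid \<delta> m" using M0_valid[OF Cd g] .
  have bal: "msrcM (M0 C) = mtgtM (M0 C) + {#}" using C by (simp add: M0_props)
  have ne: "M0 C \<noteq> {#}" using C by (simp add: M0_def)
  have "(\<exists>p X. der \<delta> p {#p#} X \<and> X \<noteq> {#} \<and> X \<subseteq># mcont (M0 C)) \<or> ({#} = {#0::nat#} \<and> der \<delta> 0 {#} (mcont (M0 C)))"
    using macro_main[OF vM bal, of 0] ne by simp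
  then obtain p X where X: "der \<delta> p {#p#} X" "X \<noteq> {#}" "X \<subseteq># C" by (auto simp: M0_props)
  have Xb: "msource X = mtarget X" using der_bal[OF X(1)] by (simp add: add.commute)
  have "?P X" using X Xb C subset_mset.trans by blast
  then have "size C \<le> size X" using Cmin by blast
  then have XC: "X = C" using sub_eq_size[OF X(3)] by simp
  have nr: "norep C"
    unfolding norep_def
  proof (intro allI impI)
    fix Y' assume a: "Y' \<subseteq># C" "Y' \<noteq> {#}" "Y' \<noteq> C"
    show "msource Y' \<noteq> mtarget Y'"
    proof
      assume "msource Y' = mtarget Y'"
      then have "?P Y'" using a C subset_mset.trans by blast
      then have "size C \<le> size Y'" using Cmin by blast
      then show False using sub_eq_size[OF a(1)] a(3) by simp
    qed
  qed
  have dC: "der \<delta> p {#p#} C" using X(1) XC by simp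
  obtain P where P: "P \<subseteq> S" "size C \<le> card P * 2 ^ card S"
    using spine_bound[OF dC refl nr msupp_S[OF Cd g] fS] by blast
  have "card P \<le> card S" using P(1) fS card_mono by blast
  then have "card P * 2 ^ card S \<le> card S * 2 ^ card S" by simp
  then have "size C \<le> card S * 2 ^ card S" using P(2) by linarith
  moreover have "is_cycle \<delta> C" using der_cycle[OF dC] C by simp
  ultimately show ?thesis using C by blast
qed

lemma run_core:
  assumes g: "good \<delta> S" and fS: "finite S" and Rd: "set_mset R \<subseteq> \<delta>"
    and Rb: "msource R = mtarget R + {#s0#}"
    and nc: "\<forall>Y. Y \<subseteq># R \<longrightarrow> Y \<noteq> {#} \<longrightarrow> msource Y \<noteq> mtarget Y"
  shows "size R < 2 ^ card S"
proof -
  have vM: "\<forall>m\<in>#M0 R. valid \<delta> m" using M0_valid[OF Rd g] .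
  have bal: "msrcM (M0 R) = mtgtM (M0 R) + {#s0#}" using Rb by (simp add: M0_props)
  have "(\<exists>p X. der \<delta> p {#p#} X \<and> X \<noteq> {#} \<and> X \<subseteq># mcont (M0 R)) \<or> ({#s0#} = {#s0#} \<and> der \<delta> s0 {#} (mcont (M0 R)))"
    using macro_main[OF vM bal, of s0] by simp
  then have d: "der \<delta> s0 {#} R"
  proof
    assume "\<exists>p X. der \<delta> p {#p#} X \<and> X \<noteq> {#} \<and> X \<subseteq># mcont (M0 R)"
    then obtain p X where X: "der \<delta> p {#p#} X" "X \<noteq> {#}" "X \<subseteq># R" by (auto simp: M0_props)
    have Xb: "msource X = mtarget X" using der_bal[OF X(1)] by (simp add: add.commute)
    then show ?thesis using nc X by blast
  qed (simp add: M0_props)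
  have nr: "norep R" using nc unfolding norep_def by blast
  have "size R < 2 ^ card (msupp R)" using comp_bound[OF d refl nr] .
  moreover have "card (msupp R) \<le> card S" using msupp_S[OF Rd g] fS card_mono by blast
  then have "(2::nat) ^ card (msupp R) \<le> 2 ^ card S" by (simp add: power_increasing)
  ultimately show ?thesis by linarith
qed

lemma decomp:
  assumes g: "good \<delta> S" and fS: "finite S" and Dd: "set_mset D \<subseteq> \<delta>"
  shows "\<exists>R Cs. D = R + sum_mset Cs \<and> (\<forall>C\<in>#Cs. C \<noteq> {#} \<and> is_cycle \<delta> C \<and> size C \<le> card S * 2 ^ card S)
     \<and> (\<forall>Y. Y \<subseteq># R \<longrightarrow> Y \<noteq> {#} \<longrightarrow> msource Y \<noteq> mtarget Y)"
  using Dd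
proof (induction "size D" arbitrary: D rule: less_induct)
  case less
  show ?case
  proof (cases "\<exists>Y. Y \<subseteq># D \<and> Y \<noteq> {#} \<and> msource Y = mtarget Y")
    case True
    then obtain Y where Y: "Y \<subseteq># D" "Y \<noteq> {#}" "msource Y = mtarget Y" by blast
    have "set_mset Y \<subseteq> \<delta>" using Y(1) less.prems by (meson set_mset_mono subset_trans)
    then obtain C where C: "C \<subseteq># Y" "C \<noteq> {#}" "is_cycle \<delta> C" "size C \<le> card S * 2 ^ card S"
      using core_cycle[OF g fS _ Y(2,3)] by blast
    have CD: "C \<subseteq># D" using subset_mset.trans[OF C(1) Y(1)] .
    have "size (D - C) = size D - size C" using size_Diff_submset[OF CD] .
    moreover have "0 < size C" using C(2) by (simp add: nonempty_has_size)
    moreover have "size C \<le> size D" using size_mset_mono[OF CD] .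
    ultimately have sz: "size (D - C) < size D" by linarith
    have sd: "set_mset (D - C) \<subseteq> \<delta>" using less.prems by (meson in_diffD subset_iff)
    obtain R Cs where RC: "D - C = R + sum_mset Cs" "\<forall>C\<in>#Cs. C \<noteq> {#} \<and> is_cycle \<delta> C \<and> size C \<le> card S * 2 ^ card S"
      "\<forall>Y. Y \<subseteq># R \<longrightarrow> Y \<noteq> {#} \<longrightarrow> msource Y \<noteq> mtarget Y"
      using less.hyps[OF sz sd] by blast
    have "D = (D - C) + C" using subset_mset.diff_add[OF CD] by simp
    also have "\<dots> = R + sum_mset (add_mset C Cs)" using RC(1) by (simp add: add_ac)
    finally have eqD: "D = R + sum_mset (add_mset C Cs)" .
    have "\<forall>C'\<in>#add_mset C Cs. C' \<noteq> {#} \<and> is_cycle \<delta> C' \<and> size C' \<le> card S * 2 ^ card S"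
      using RC(2) C by simp
    then show ?thesis using RC(3) eqD by (intro exI[of _ R] exI[of _ "add_mset C Cs"]) simp
  next
    case False
    then have "D = D + sum_mset {#} \<and> (\<forall>C\<in>#{#}. C \<noteq> {#} \<and> is_cycle \<delta> C \<and> size C \<le> card S * 2 ^ card S)
     \<and> (\<forall>Y. Y \<subseteq># D \<longrightarrow> Y \<noteq> {#} \<longrightarrow> msource Y \<noteq> mtarget Y)" by auto
    then show ?thesis by blast
  qed
qed

lemma sum_bal: "(\<forall>C\<in>#Cs. is_cycle \<delta> C) \<Longrightarrow> msource (sum_mset Cs) = mtarget (sum_mset Cs)"
  by (induction Cs) (auto simp: is_cycle_def)

lemma simple_bound:
  assumes g: "good \<delta> S" and fS: "finite S" and sc: "simple_cycle \<delta> D"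
  shows "size D \<le> card S * 2 ^ card S"
proof -
  have Dn: "D \<noteq> {#}" and cy: "is_cycle \<delta> D" using sc unfolding simple_cycle_def by auto
  have Dd: "set_mset D \<subseteq> \<delta>" and Db: "msource D = mtarget D" using cy unfolding is_cycle_def by auto
  obtain R Cs where RC: "D = R + sum_mset Cs" "\<forall>C\<in>#Cs. C \<noteq> {#} \<and> is_cycle \<delta> C \<and> size C \<le> card S * 2 ^ card S"
      "\<forall>Y. Y \<subseteq># R \<longrightarrow> Y \<noteq> {#} \<longrightarrow> msource Y \<noteq> mtarget Y"
    using decomp[OF g fS Dd] by blast
  have sb: "msource (sum_mset Cs) = mtarget (sum_mset Cs)" using sum_bal[of Cs \<delta>] RC(2) by blast
  have "msource R + msource (sum_mset Cs) = mtarget R + mtarget (sum_mset Cs)" using Db RC(1) by simp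
  then have "msource R = mtarget R" using sb by simp
  moreover have "R \<noteq> {#} \<Longrightarrow> msource R \<noteq> mtarget R" using RC(3) by simp
  ultimately have "R = {#}" by blast
  then have DC: "D = sum_mset Cs" using RC(1) by simp
  have "size Cs \<le> 1"
  proof (rule ccontr)
    assume "\<not> size Cs \<le> 1"
    obtain xs where xs: "mset xs = Cs" using ex_mset by blast
    have "length xs \<ge> 2" using xs \<open>\<not> size Cs \<le> 1\<close> by auto
    moreover have "\<forall>C\<in>set xs. C \<noteq> {#} \<and> is_cycle \<delta> C" using RC(2) xs by auto
    moreover have "D = sum_list xs" unfolding DC xs[symmetric] by (simp add: sum_mset_sum_list)
    ultimately show False using sc unfolding simple_cycle_def by blast
  qed
  moreover have "Cs \<noteq> {#}" using Dn DC by auto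
  then have "0 < size Cs" by (simp add: nonempty_has_size)
  ultimately have "size Cs = 1" by simp
  then obtain C where "Cs = {#C#}" using size_1_singleton_mset by blast
  then show ?thesis using RC(2) DC by simp
qed

definition shape :: "trans \<Rightarrow> nat \<times> nat multiset" where
  "shape \<tau> = (tr_source \<tau>, tr_target \<tau>)"

lemma transfer_supp:
  assumes "D1 \<subseteq># D" "\<forall>\<tau>\<in>#D. \<exists>\<tau>'. \<tau>' \<in># D1 \<and> shape \<tau>' = shape \<tau>"
  shows "msupp D1 = msupp D"
proof
  show "msupp D1 \<subseteq> msupp D" using msupp_mono[OF assms(1)] .
  show "msupp D \<subseteq> msupp D1"
  proof
    fix s assume "s \<in> msupp D"
    then obtain \<tau> where t: "\<tau> \<in># D" "tr_source \<tau> = s" unfolding msupp_def msource_def by auto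
    then obtain \<tau>' where t': "\<tau>' \<in># D1" "shape \<tau>' = shape \<tau>" using assms(2) by blast
    then have "tr_source \<tau>' = s" using t(2) unfolding shape_def by simp
    moreover have "tr_source \<tau>' \<in> tr_source ` set_mset D1" using t'(1) by simp
    ultimately show "s \<in> msupp D1" unfolding msupp_def msource_def by simp
  qed
qed

lemma transfer_reach:
  assumes "\<forall>\<tau>\<in>#D. \<exists>\<tau>'. \<tau>' \<in># D1 \<and> shape \<tau>' = shape \<tau>" "reachable_in D p t"
  shows "reachable_in D1 p t"
proof -
  obtain f where f: "\<forall>\<tau>\<in>#D. f \<tau> \<in># D1 \<and> shape (f \<tau>) = shape \<tau>" using bchoice[OF assms(1)] by blast
  have fs: "\<And>\<tau>. \<tau> \<in># D \<Longrightarrow> tr_source (f \<tau>) = tr_source \<tau> \<and> tr_target (f \<tau>) = tr_target \<tau>"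
    using f unfolding shape_def by auto
  obtain ts where ts: "ts \<noteq> []" "set ts \<subseteq> set_mset D" "tr_source (hd ts) = p"
    "\<forall>i. Suc i < length ts \<longrightarrow> tr_source (ts ! Suc i) \<in># tr_target (ts ! i)"
    "t \<in># tr_target (last ts)"
    using assms(2) unfolding reachable_in_def by blast
  have h: "hd ts \<in># D" "last ts \<in># D" using ts(1,2) by auto
  have "map f ts \<noteq> []" using ts(1) by simp
  moreover have "set (map f ts) \<subseteq> set_mset D1" using ts(2) f by auto
  moreover have "tr_source (hd (map f ts)) = p" using ts(1,3) fs[OF h(1)] by (simp add: hd_map)
  moreover have "\<forall>i. Suc i < length (map f ts) \<longrightarrow> tr_source (map f ts ! Suc i) \<in># tr_target (map f ts ! i)"
  proof (intro allI impI)
    fix i assume i: "Suc i < length (map f ts)"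
    then have "ts ! Suc i \<in># D" "ts ! i \<in># D" using ts(2) nth_mem[of "Suc i" ts] nth_mem[of i ts] by auto
    then show "tr_source (map f ts ! Suc i) \<in># tr_target (map f ts ! i)"
      using ts(4) i fs by simp
  qed
  moreover have "t \<in># tr_target (last (map f ts))" using ts(1,5) fs[OF h(2)] by (simp add: last_map)
  ultimately show ?thesis unfolding reachable_in_def by blast
qed

lemma transfer_conn:
  assumes "D1 \<subseteq># D" "\<forall>\<tau>\<in>#D. \<exists>\<tau>'. \<tau>' \<in># D1 \<and> shape \<tau>' = shape \<tau>" "connected_from D s"
  shows "connected_from D1 s"
  using assms transfer_supp[OF assms(1,2)] transfer_reach[OF assms(2)] unfolding connected_from_def by blast

lemma mem_sum_sub: assumes "C \<in># Cs" shows "C \<subseteq># sum_mset Cs"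
proof -
  obtain Cs' where "Cs = add_mset C Cs'" using multi_member_split[OF assms] by blast
  then show ?thesis by simp
qed

lemma pair_sum_sub: assumes "{#C1, C2#} \<subseteq># Cs" shows "C1 + C2 \<subseteq># sum_mset Cs"
proof -
  obtain Cs' where "Cs = {#C1, C2#} + Cs'" using assms by (metis subset_mset.le_iff_add)
  then show ?thesis by simp
qed

lemma sub_diff: "C1 + C2 \<subseteq># D \<Longrightarrow> C2 \<subseteq># D - C1"
  by (simp add: subseteq_mset_def) (metis add.commute le_diff_conv2 le_add2 order_trans)

lemma size_sum_le: "(\<forall>C\<in>#Cs. size C \<le> B) \<Longrightarrow> size (sum_mset (Cs::'a multiset multiset)) \<le> size Cs * B"
proof (induction Cs)
  case (add x Cs)
  then have "size (sum_mset Cs) \<le> size Cs * B" "size x \<le> B" by auto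
  then show ?case using size_union[of x "sum_mset Cs"] by simp
qed simp

definition Sh :: "nat set \<Rightarrow> (nat \<times> nat multiset) set" where
  "Sh S = {(s, T). s \<in> S \<and> set_mset T \<subseteq> S \<and> size T \<le> 2}"

definition LL :: "nat set \<Rightarrow> nat list set" where "LL S = insert [] ((\<lambda>x. [x]) ` S)"

lemma Sh_sub: "Sh S \<subseteq> (\<lambda>(s, a, b). (s, mset (a @ b))) ` (S \<times> LL S \<times> LL S)"
proof
  fix x assume "x \<in> Sh S"
  then obtain s T where x: "x = (s, T)" "s \<in> S" "set_mset T \<subseteq> S" "size T \<le> 2" unfolding Sh_def by auto
  consider "T = {#}" | r where "T = {#r#}" | r1 r2 where "T = {#r1, r2#}"
    using size_le2_cases[OF x(4)] by blast
  then show "x \<in> (\<lambda>(s, a, b). (s, mset (a @ b))) ` (S \<times> LL S \<times> LL S)"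
  proof cases
    case 1
    then have "x = (\<lambda>(s, a, b). (s, mset (a @ b))) (s, [], [])" using x by simp
    moreover have "(s, [], []) \<in> S \<times> LL S \<times> LL S" using x unfolding LL_def by simp
    ultimately show ?thesis by (rule image_eqI)
  next
    case (2 r)
    then have "x = (\<lambda>(s, a, b). (s, mset (a @ b))) (s, [r], [])" using x by simp
    moreover have "(s, [r], []) \<in> S \<times> LL S \<times> LL S" using x 2 unfolding LL_def by simp
    ultimately show ?thesis by (rule image_eqI)
  next
    case (3 r1 r2)
    then have "x = (\<lambda>(s, a, b). (s, mset (a @ b))) (s, [r1], [r2])" using x by (simp add: add_mset_commute)
    moreover have "(s, [r1], [r2]) \<in> S \<times> LL S \<times> LL S" using x 3 unfolding LL_def by simp
    ultimately show ?thesis by (rule image_eqI)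
  qed
qed

lemma Sh_card: assumes "finite S" shows "finite (Sh S)" "card (Sh S) \<le> card S * ((card S + 1) * (card S + 1))"
proof -
  have fL: "finite (LL S)" using assms unfolding LL_def by simp
  have fI: "finite ((\<lambda>x. [x]) ` S)" using assms by simp
  have "card (LL S) \<le> Suc (card ((\<lambda>x. [x]) ` S))" unfolding LL_def using fI by (simp add: card_insert_if)
  then have cL: "card (LL S) \<le> card S + 1" using card_image_le[OF assms, of "\<lambda>x. [x]"] by linarith
  have fP: "finite (S \<times> LL S \<times> LL S)" using assms fL by simp
  show "finite (Sh S)" using finite_subset[OF Sh_sub] fP by blast
  have "card (Sh S) \<le> card ((\<lambda>(s, a, b). (s, mset (a @ b))) ` (S \<times> LL S \<times> LL S))"
    using card_mono[OF _ Sh_sub] fP by blast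
  also have "\<dots> \<le> card (S \<times> LL S \<times> LL S)" using card_image_le[OF fP] .
  also have "\<dots> = card S * (card (LL S) * card (LL S))" by (simp add: card_cartesian_product)
  also have "\<dots> \<le> card S * ((card S + 1) * (card S + 1))" using cL by (intro mult_le_mono2 mult_le_mono) auto
  finally show "card (Sh S) \<le> card S * ((card S + 1) * (card S + 1))" .
qed

lemma distinct_size_card:
  assumes "\<forall>x. count M x \<le> 1" shows "size M = card (set_mset M)"
proof -
  have "M = mset_set (set_mset M)"
  proof (rule multiset_eqI)
    fix x show "count M x = count (mset_set (set_mset M)) x"
    proof (cases "x \<in># M")
      case True
      then have "0 < count M x" by simp
      then have "count M x = 1" using assms[rule_format, of x] by linarith
      then show ?thesis using True by simp
    next
      case False then show ?thesis by (simp add: not_in_iff)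
    qed
  qed
  then show ?thesis by (metis size_mset_set)
qed

lemma good_shape: "good \<delta> S \<Longrightarrow> \<tau> \<in> \<delta> \<Longrightarrow> shape \<tau> \<in> Sh S"
  unfolding good_def Sh_def shape_def by auto

lemma skel_bound:
  assumes g: "good \<delta> S" and fS: "finite S" and sk: "skeleton_run \<delta> s0 D"
  shows "size D \<le> 2 ^ card S + card (Sh S) * (card S * 2 ^ card S)"
proof -
  have run: "is_run \<delta> s0 D" using sk unfolding skeleton_run_def by blast
  have Dd: "set_mset D \<subseteq> \<delta>" and conn: "connected_from D s0" and Db: "msource D = mtarget D + {#s0#}"
    using run unfolding is_run_def by auto
  obtain R Cs where RC: "D = R + sum_mset Cs" "\<forall>C\<in>#Cs. C \<noteq> {#} \<and> is_cycle \<delta> C \<and> size C \<le> card S * 2 ^ card S"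
      "\<forall>Y. Y \<subseteq># R \<longrightarrow> Y \<noteq> {#} \<longrightarrow> msource Y \<noteq> mtarget Y"
    using decomp[OF g fS Dd] by blast
  have sb: "msource (sum_mset Cs) = mtarget (sum_mset Cs)" using sum_bal[of Cs \<delta>] RC(2) by blast
  have "msource R + msource (sum_mset Cs) = mtarget R + {#s0#} + mtarget (sum_mset Cs)"
    using Db RC(1) by (simp add: add_ac)
  then have Rb: "msource R = mtarget R + {#s0#}" using sb by simp
  have Rd: "set_mset R \<subseteq> \<delta>" using Dd RC(1) by auto
  have sR: "size R < 2 ^ card S" using run_core[OF g fS Rd Rb RC(3)] .
  have sumD: "sum_mset Cs \<subseteq># D" using RC(1) by simp
  have own: "\<forall>C\<in>#Cs. \<exists>\<sigma>. \<sigma> \<in> shape ` set_mset C \<and> \<sigma> \<notin> shape ` set_mset (D - C)"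
  proof (rule ballI, rule ccontr)
    fix C assume C: "C \<in># Cs" and nx: "\<not> (\<exists>\<sigma>. \<sigma> \<in> shape ` set_mset C \<and> \<sigma> \<notin> shape ` set_mset (D - C))"
    have hyp: "\<And>\<sigma>. \<sigma> \<in> shape ` set_mset C \<Longrightarrow> \<sigma> \<in> shape ` set_mset (D - C)" using nx by blast
    have Cp: "C \<noteq> {#}" "is_cycle \<delta> C" using RC(2) C by auto
    have CD: "C \<subseteq># D" using subset_mset.trans[OF mem_sum_sub[OF C] sumD] .
    have wit: "\<forall>\<tau>\<in>#D. \<exists>\<tau>'. \<tau>' \<in># D - C \<and> shape \<tau>' = shape \<tau>"
    proof
      fix \<tau> assume tD: "\<tau> \<in># D"
      show "\<exists>\<tau>'. \<tau>' \<in># D - C \<and> shape \<tau>' = shape \<tau>"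
      proof (cases "\<tau> \<in># D - C")
        case True then show ?thesis by blast
      next
        case False
        then have "\<tau> \<in># C" using tD by (metis in_diff_count not_in_iff count_greater_zero_iff)
        then have "shape \<tau> \<in> shape ` set_mset (D - C)" using hyp by simp
        then obtain \<tau>' where "\<tau>' \<in># D - C" "shape \<tau> = shape \<tau>'" by blast
        then show ?thesis by (intro exI[of _ \<tau>']) simp
      qed
    qed
    have D1s: "D - C \<subseteq># D" by simp
    have DD: "D = (D - C) + C" using subset_mset.diff_add[OF CD] by simp
    have Cb: "msource C = mtarget C" using Cp(2) unfolding is_cycle_def by simp
    define E where "E = D - C"
    have DE: "D = E + C" using DD unfolding E_def .
    have "msource E + msource C = mtarget E + {#s0#} + msource C"
      using Db Cb unfolding DE by (simp add: add_ac)
    then have "msource E = mtarget E + {#s0#}" by simp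
    then have D1b: "msource (D - C) = mtarget (D - C) + {#s0#}" unfolding E_def .
    have sd: "set_mset (D - C) \<subseteq> \<delta>" using Dd by (meson in_diffD subset_iff)
    have "is_run \<delta> s0 (D - C)" unfolding is_run_def
      using D1b transfer_conn[OF D1s wit conn] sd by simp
    moreover have "msupp (D - C) = msupp D" using transfer_supp[OF D1s wit] .
    ultimately have "\<exists>D1 C'. is_run \<delta> s0 D1 \<and> C' \<noteq> {#} \<and> is_cycle \<delta> C' \<and> msupp D1 = msupp D \<and> D = D1 + C'"
      using Cp DD by (intro exI[of _ "D - C"] exI[of _ C]) simp
    then show False using sk unfolding skeleton_run_def by simp
  qed
  define f where "f C = (SOME \<sigma>. \<sigma> \<in> shape ` set_mset C \<and> \<sigma> \<notin> shape ` set_mset (D - C))" for C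
  have fC: "\<And>C. C \<in># Cs \<Longrightarrow> f C \<in> shape ` set_mset C \<and> f C \<notin> shape ` set_mset (D - C)"
  proof -
    fix C assume "C \<in># Cs"
    then have "\<exists>\<sigma>. \<sigma> \<in> shape ` set_mset C \<and> \<sigma> \<notin> shape ` set_mset (D - C)" using own by blast
    then show "f C \<in> shape ` set_mset C \<and> f C \<notin> shape ` set_mset (D - C)" unfolding f_def by (rule someI_ex)
  qed
  have pair: "\<And>C1 C2. {#C1, C2#} \<subseteq># Cs \<Longrightarrow> f C1 \<notin> shape ` set_mset C2"
  proof -
    fix C1 C2 assume p: "{#C1, C2#} \<subseteq># Cs"
    have C1: "C1 \<in># Cs" using mset_subset_eqD[OF p, of C1] by simp
    have "C1 + C2 \<subseteq># D" using subset_mset.trans[OF pair_sum_sub[OF p] sumD] .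
    then have "C2 \<subseteq># D - C1" using sub_diff by blast
    then have "set_mset C2 \<subseteq> set_mset (D - C1)" by (rule set_mset_mono)
    then show "f C1 \<notin> shape ` set_mset C2" using fC[OF C1] by blast
  qed
  have dist: "\<forall>x. count Cs x \<le> 1"
  proof (rule allI, rule ccontr)
    fix C assume "\<not> count Cs C \<le> 1"
    then have c2: "count Cs C \<ge> 2" by simp
    then have "0 < count Cs C" by linarith
    then have C: "C \<in># Cs" by simp
    have "{#C, C#} \<subseteq># Cs" unfolding subseteq_mset_def
    proof
      fix x show "count {#C, C#} x \<le> count Cs x" using c2 by (cases "x = C") auto
    qed
    then have "f C \<notin> shape ` set_mset C" using pair by blast
    then show False using fC[OF C] by blast
  qed
  have inj: "inj_on f (set_mset Cs)"
  proof (rule inj_onI, rule ccontr)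
    fix C1 C2 assume a: "C1 \<in># Cs" "C2 \<in># Cs" "f C1 = f C2" "C1 \<noteq> C2"
    have "{#C1, C2#} \<subseteq># Cs" unfolding subseteq_mset_def
    proof
      fix x show "count {#C1, C2#} x \<le> count Cs x"
      proof -
        have p1: "count Cs C1 \<ge> 1" using a(1) by (simp add: Suc_le_eq)
        have p2: "count Cs C2 \<ge> 1" using a(2) by (simp add: Suc_le_eq)
        show ?thesis using p1 p2 a(4) by (cases "x = C1"; cases "x = C2") auto
      qed
    qed
    then have "f C1 \<notin> shape ` set_mset C2" using pair by blast
    then show False using fC[OF a(2)] a(3) by simp
  qed
  have img: "f ` set_mset Cs \<subseteq> Sh S"
  proof
    fix x assume "x \<in> f ` set_mset Cs"
    then obtain C where C: "C \<in># Cs" "x = f C" by blast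
    then obtain \<tau> where t: "\<tau> \<in># C" "x = shape \<tau>" using fC[OF C(1)] by blast
    have "C \<subseteq># D" using subset_mset.trans[OF mem_sum_sub[OF C(1)] sumD] .
    then have "\<tau> \<in> \<delta>" using t(1) Dd by (meson mset_subset_eqD subsetD)
    then show "x \<in> Sh S" using good_shape[OF g] t(2) by simp
  qed
  have "size Cs = card (set_mset Cs)" using distinct_size_card[OF dist] .
  also have "\<dots> \<le> card (Sh S)" using card_inj_on_le[OF inj img Sh_card(1)[OF fS]] .
  finally have sC: "size Cs \<le> card (Sh S)" .
  have "size (sum_mset Cs) \<le> size Cs * (card S * 2 ^ card S)" using size_sum_le RC(2) by blast
  also have "\<dots> \<le> card (Sh S) * (card S * 2 ^ card S)" using sC by simp
  finally have "size (sum_mset Cs) \<le> card (Sh S) * (card S * 2 ^ card S)" .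
  then show ?thesis using sR RC(1) by simp
qed

lemma vnorm_le: "vnorm v \<le> size v"
  unfolding vnorm_def using count_le_size[of v] by (simp add: Max_le_iff)

lemma mout_size: "set_mset D \<subseteq> \<delta> \<Longrightarrow> good \<delta> S \<Longrightarrow> size (mout D) \<le> size D"
proof (induction D)
  case (add x D)
  then have "size (tr_out x) \<le> 1" "size (mout D) \<le> size D" unfolding good_def by auto
  then show ?case by (simp add: mout_def)
qed (simp add: mout_def)

lemma arith_bound: "(1::nat) \<le> n \<Longrightarrow> 2 ^ n + n * ((n + 1) * (n + 1)) * (n * 2 ^ n) \<le> 128 * 2 ^ (n ^ 2)"
proof -
  assume "1 \<le> n"
  have a: "n \<le> 2 ^ n" using less_exp[of n] by simp
  have b: "n + 1 \<le> 2 ^ n" using less_exp[of n] by linarith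
  have "n * ((n + 1) * (n + 1)) * n \<le> 2 ^ n * ((2 ^ n) * (2 ^ n)) * 2 ^ n"
    using a b by (intro mult_le_mono) auto
  also have "\<dots> = 2 ^ (4 * n)" by (simp add: power_add[symmetric] mult.commute)
  finally have c: "n * ((n + 1) * (n + 1)) * n \<le> 2 ^ (4 * n)" .
  have "n * ((n + 1) * (n + 1)) * (n * 2 ^ n) = (n * ((n + 1) * (n + 1)) * n) * 2 ^ n" by simp
  also have "\<dots> \<le> 2 ^ (4 * n) * 2 ^ n" using c by simp
  also have "\<dots> = 2 ^ (5 * n)" by (simp add: power_add[symmetric])
  finally have d: "n * ((n + 1) * (n + 1)) * (n * 2 ^ n) \<le> 2 ^ (5 * n)" .
  have e: "(2::nat) ^ n \<le> 2 ^ (5 * n)" by (simp add: power_increasing)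
  have f: "5 * n \<le> n ^ 2 + 6"
  proof (cases "n \<ge> 5")
    case True then have "5 * n \<le> n * n" using mult_le_mono1[OF True, of n] by simp
    then show ?thesis unfolding power2_eq_square by linarith
  next
    case False then have "n = 0 \<or> n = 1 \<or> n = 2 \<or> n = 3 \<or> n = 4" by arith
    then show ?thesis by (auto simp: power2_eq_square)
  qed
  have "(2::nat) ^ (5 * n) \<le> 2 ^ (n ^ 2 + 6)" using f by (simp add: power_increasing)
  also have "\<dots> = 64 * 2 ^ (n ^ 2)" by (simp add: power_add)
  finally have g: "(2::nat) ^ (5 * n) \<le> 64 * 2 ^ (n ^ 2)" .
  show ?thesis using d e g by linarith
qed

theorem lemma6:
  shows "\<exists>(c::nat) (k::nat). \<forall>\<Sigma> S s0 \<delta> D.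
     comm_grammar \<Sigma> S s0 \<delta> \<and> (simple_cycle \<delta> D \<or> skeleton_run \<delta> s0 D) \<longrightarrow>
     vnorm (mout D) \<le> c * 2 ^ (card S ^ k)"
proof (intro exI allI impI)
  fix \<Sigma> S s0 \<delta> D
  assume a: "comm_grammar \<Sigma> S s0 \<delta> \<and> (simple_cycle \<delta> D \<or> skeleton_run \<delta> s0 D)"
  then have cg: "comm_grammar \<Sigma> S s0 \<delta>" by blast
  have g: "good \<delta> S" using cg unfolding comm_grammar_def good_def by blast
  have fS: "finite S" and s0S: "s0 \<in> S" using cg unfolding comm_grammar_def by auto
  have n1: "1 \<le> card S" using fS s0S by (metis One_nat_def Suc_leI card_gt_0_iff empty_iff)
  let ?n = "card S"
  have Dd: "set_mset D \<subseteq> \<delta>" using a unfolding simple_cycle_def is_cycle_def skeleton_run_def is_run_def by blast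
  have "size D \<le> 2 ^ ?n + ?n * ((?n + 1) * (?n + 1)) * (?n * 2 ^ ?n)"
  proof (cases "simple_cycle \<delta> D")
    case True
    then have "size D \<le> ?n * 2 ^ ?n" using simple_bound[OF g fS] by blast
    moreover have "?n * 2 ^ ?n \<le> ?n * ((?n + 1) * (?n + 1)) * (?n * 2 ^ ?n)"
      using n1 by simp
    ultimately show ?thesis by linarith
  next
    case False
    then have sk: "skeleton_run \<delta> s0 D" using a by blast
    have "size D \<le> 2 ^ ?n + card (Sh S) * (?n * 2 ^ ?n)" using skel_bound[OF g fS sk] .
    moreover have "card (Sh S) * (?n * 2 ^ ?n) \<le> ?n * ((?n + 1) * (?n + 1)) * (?n * 2 ^ ?n)"
      using Sh_card(2)[OF fS] by (intro mult_le_mono1)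
    ultimately show ?thesis by linarith
  qed
  also have "\<dots> \<le> 128 * 2 ^ (?n ^ 2)" using arith_bound[OF n1] .
  finally have "size D \<le> 128 * 2 ^ (?n ^ 2)" .
  moreover have "vnorm (mout D) \<le> size D" using vnorm_le[of "mout D"] mout_size[OF Dd g] by linarith
  ultimately show "vnorm (mout D) \<le> 128 * 2 ^ (card S ^ 2)" by linarith
qed


end
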